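(* Let $I$ be a general ring. The following are equivalent: (1) $I$ is a quasipolar general ring; (2) for every $a\in I$, the element $(0,a)$ is quasipolar in the ring $E(\mathbb{Z};I)$; (3) there exists a ring $S$ with identity such that $I$ is a unital $(S,S)$-bimodule compatible with the multiplication of $I$ (as below) and $(0,a)$ is quasipolar in $E(S;I)$ for every $a\in I$.
   Context: A general ring is an associative ring not necessarily having an identity. For $p,q\in I$, $p*q=p+q-pq$; $Q(I)=\{q\in I\mid p*q=0=q*p\text{ for some }p\in I\}$; $\mathrm{comm}(a)=\{x\mid xa=ax\}$, $\mathrm{comm}^2(a)=\{x\mid xy=yx\text{ for all }y\in\mathrm{comm}(a)\}$; $QN(I)=\{q\in I\mid qx\in Q(I)\text{ for all }x\in\mathrm{comm}(q)\}$. An element $a\in I$ is quasipolar in $I$ if there is an idempotent $p\in\mathrm{comm}^2(a)$ with $a+p\in Q(I)$ and $a-ap\in QN(I)$; $I$ is quasipolar if all its elements are. For a ring $R$ with identity, $U(R)$ is its unit group, $R^{qnil}=\{a\in R\mid 1+ax\in U(R)\text{ for all }x\in\mathrm{comm}(a)\}$, and $a\in R$ is quasipolar if there is an idempotent $p\in\mathrm{comm}^2(a)$ with $a+p\in U(R)$ and $ap\in R^{qnil}$. If $S$ is a ring with identity and $I$ is a unital $(S,S)$-bimodule such that $(vw)s=v(ws)$, $(vs)w=v(sw)$, $(sv)w=s(vw)$ for all $v,w\in I$, $s\in S$, the ideal-extension (Dorroh extension) $E(S;I)$ is the additive group $S\oplus I$ with multiplication $(s,v)(r,w)=(sr, sw+vr+vw)$;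 it is a ring with identity $(1,0)$. $E(\mathbb{Z};I)$ is the standard unitization of $I$. *)

theory Defs
  imports "HOL-Algebra.Ring"
begin

definition circ :: "'a::ring \<Rightarrow> 'a \<Rightarrow> 'a" where
  "circ p q = p + q - p * q"

definition Qset :: "'a::ring set" where
  "Qset = {q. \<exists>p. circ p q = 0 \<and> circ q p = 0}"

definition gcomm :: "'a::ring \<Rightarrow> 'a set" where
  "gcomm a = {x. x * a = a * x}"

definition gcomm2 :: "'a::ring \<Rightarrow> 'a set" where
  "gcomm2 a = {x. \<forall>y \<in> gcomm a. x * y = y * x}"

definition QNset :: "'a::ring set" where
  "QNset = {q. \<forall>x \<in> gcomm q. q * x \<in> Qset}"

definition gquasipolar_elem :: "'a::ring \<Rightarrow> bool" where
  "gquasipolar_elem a \<longleftrightarrow>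
     (\<exists>p \<in> gcomm2 a. p * p = p \<and> a + p \<in> Qset \<and> a - a * p \<in> QNset)"

definition gquasipolar_ring :: "'a::ring itself \<Rightarrow> bool" where
  "gquasipolar_ring _ \<longleftrightarrow> (\<forall>a::'a. gquasipolar_elem a)"

definition rcomm :: "('b, 'm) ring_scheme \<Rightarrow> 'b \<Rightarrow> 'b set" where
  "rcomm R a = {x \<in> carrier R. x \<otimes>\<^bsub>R\<^esub> a = a \<otimes>\<^bsub>R\<^esub> x}"

definition rcomm2 :: "('b, 'm) ring_scheme \<Rightarrow> 'b \<Rightarrow> 'b set" where
  "rcomm2 R a = {x \<in> carrier R. \<forall>y \<in> rcomm R a. x \<otimes>\<^bsub>R\<^esub> y = y \<otimes>\<^bsub>R\<^esub> x}"

definition rqnil :: "('b, 'm) ring_scheme \<Rightarrow> 'b set" where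
  "rqnil R = {a \<in> carrier R. \<forall>x \<in> rcomm R a. \<one>\<^bsub>R\<^esub> \<oplus>\<^bsub>R\<^esub> a \<otimes>\<^bsub>R\<^esub> x \<in> Units R}"

definition rquasipolar :: "('b, 'm) ring_scheme \<Rightarrow> 'b \<Rightarrow> bool" where
  "rquasipolar R a \<longleftrightarrow>
     (\<exists>p \<in> rcomm2 R a. p \<otimes>\<^bsub>R\<^esub> p = p \<and> a \<oplus>\<^bsub>R\<^esub> p \<in> Units R
        \<and> a \<otimes>\<^bsub>R\<^esub> p \<in> rqnil R)"

definition compat_bimodule ::
  "('s::ring_1 \<Rightarrow> 'a::ring \<Rightarrow> 'a) \<Rightarrow> ('a \<Rightarrow> 's \<Rightarrow> 'a) \<Rightarrow> bool" where
  "compat_bimodule l r \<longleftrightarrow>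
     (\<forall>s v w. l s (v + w) = l s v + l s w) \<and>
     (\<forall>s t v. l (s + t) v = l s v + l t v) \<and>
     (\<forall>s t v. l (s * t) v = l s (l t v)) \<and>
     (\<forall>v. l 1 v = v) \<and>
     (\<forall>s v w. r (v + w) s = r v s + r w s) \<and>
     (\<forall>s t v. r v (s + t) = r v s + r v t) \<and>
     (\<forall>s t v. r v (s * t) = r (r v s) t) \<and>
     (\<forall>v. r v 1 = v) \<and>
     (\<forall>s t v. r (l s v) t = l s (r v t)) \<and>
     (\<forall>s v w. r (v * w) s = v * r w s) \<and>
     (\<forall>s v w. r v s * w = v * l s w) \<and>
     (\<forall>s v w. l s v * w = l s (v * w))"

definition dorroh ::
  "('s::ring_1 \<Rightarrow> 'a::ring \<Rightarrow> 'a) \<Rightarrow> ('a \<Rightarrow> 's \<Rightarrow> 'a) \<Rightarrow> ('s \<times> 'a) ring" where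
  "dorroh l r = \<lparr> carrier = UNIV,
      mult = (\<lambda>(s, v) (t, w). (s * t, l s w + r v t + v * w)),
      one = (1, 0),
      zero = (0, 0),
      add = (\<lambda>(s, v) (t, w). (s + t, v + w)) \<rparr>"

definition zact :: "int \<Rightarrow> 'a::ab_group_add \<Rightarrow> 'a" where
  "zact k v = (if 0 \<le> k then (\<Sum>i<nat k. v) else - (\<Sum>i<nat (- k). v))"

abbreviation EZ :: "(int \<times> 'a::ring) ring" where
  "EZ \<equiv> dorroh zact (\<lambda>v k. zact k v)"

end

theory Submission
  imports Defs
begin

definition nm :: "nat \<Rightarrow> 'a::ab_group_add \<Rightarrow> 'a" where
  "nm n v = (\<Sum>i<n. v)"

lemma nm_add_n: "nm (m+n) v = nm m v + nm n v"
  unfolding nm_def by (induction n) (auto simp: add_ac)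

lemma nm_add_v: "nm n (v+w) = nm n v + nm n w"
  unfolding nm_def by (simp add: sum.distrib)

lemma nm_diff: "nm n (v-w) = nm n v - nm n w"
  unfolding nm_def by (simp add: sum_subtractf)

lemma nm_Suc: "nm (Suc m) v = v + nm m v"
  unfolding nm_def by (simp add: add_ac)

lemma nm_mult: "nm (m*n) v = nm m (nm n v)"
proof (induction m)
  case 0 then show ?case by (simp add: nm_def)
next
  case (Suc m)
  have "nm (Suc m * n) v = nm (n + m*n) v" by simp
  also have "\<dots> = nm n v + nm m (nm n v)" by (simp add: nm_add_n Suc)
  finally show ?case by (simp add: nm_Suc)
qed

lemma nm_mr: "nm n ((v::'a::ring)*w) = nm n v * w"
  unfolding nm_def by (simp add: sum_distrib_right)

lemma nm_ml: "nm n ((v::'a::ring)*w) = v * nm n w"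
  unfolding nm_def by (simp add: sum_distrib_left)

lemma zact_rep:
  assumes "int a - int b = k"
  shows "zact k v = nm a v - nm b v"
proof (cases "0 \<le> k")
  case True
  then have "a = nat k + b" using assms by linarith
  then show ?thesis using True by (simp add: zact_def nm_def[symmetric] nm_add_n)
next
  case False
  then have "b = nat (-k) + a" using assms by linarith
  then show ?thesis using False by (simp add: zact_def nm_def[symmetric] nm_add_n)
qed

lemma nat_rep: "int (nat s) - int (nat (-s)) = s"
  by (cases "s \<ge> 0") auto

lemma zact_alt: "zact s v = nm (nat s) v - nm (nat (-s)) v"
  by (rule zact_rep[OF nat_rep])

lemma zact_sadd: "zact (s+t) v = zact s v + zact t v"
proof -
  have "int (nat s + nat t) - int (nat (-s) + nat (-t)) = s + t"
    using nat_rep[of s] nat_rep[of t] by simp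
  from zact_rep[OF this] show ?thesis
    by (simp add: zact_alt[of s] zact_alt[of t] nm_add_n algebra_simps)
qed

lemma zact_smult: "zact (s*t) v = zact s (zact t v)"
proof -
  have "int (nat s * nat t + nat (-s) * nat (-t)) - int (nat s * nat (-t) + nat (-s) * nat t)
      = (int (nat s) - int (nat (-s))) * (int (nat t) - int (nat (-t)))"
    by (simp add: algebra_simps)
  also have "\<dots> = s * t" by (simp only: nat_rep)
  finally have h: "int (nat s * nat t + nat (-s) * nat (-t)) - int (nat s * nat (-t) + nat (-s) * nat t) = s*t" .
  have "zact (s*t) v = nm (nat s * nat t + nat (-s) * nat (-t)) v - nm (nat s * nat (-t) + nat (-s) * nat t) v"
    by (rule zact_rep[OF h])
  also have "\<dots> = nm (nat s) (nm (nat t) v) + nm (nat (-s)) (nm (nat (-t)) v)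
       - (nm (nat s) (nm (nat (-t)) v) + nm (nat (-s)) (nm (nat t) v))"
    unfolding nm_add_n nm_mult ..
  finally show ?thesis
    by (simp add: zact_alt[of s] zact_alt[of t] nm_diff algebra_simps)
qed

lemma zact_vadd: "zact s (v+w) = zact s v + zact s w"
  by (simp add: zact_alt nm_add_v algebra_simps)

lemma zact_one: "zact 1 v = v"
  by (simp add: zact_def)

lemma zact_mr: "zact s ((v::'a::ring)*w) = zact s v * w"
  by (simp add: zact_alt nm_mr algebra_simps)

lemma zact_ml: "zact s ((v::'a::ring)*w) = v * zact s w"
  by (simp add: zact_alt nm_ml algebra_simps)

lemma zact_swap: "zact s (v::'a::ring) * w = v * zact s w"
  by (metis zact_mr zact_ml)

lemma compat_zact: "compat_bimodule (zact :: int \<Rightarrow> 'a::ring \<Rightarrow> 'a) (\<lambda>v k. zact k v)"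
  unfolding compat_bimodule_def
  by (simp add: zact_vadd zact_sadd zact_one zact_mr zact_ml zact_swap flip: zact_smult; simp add: mult.commute)

lemma circ_simp: "circ p q = p + q - p*q"
  by (simp add: circ_def)

lemma Q_sq:
  fixes c :: "'a::ring"
  assumes "c*c \<in> Qset"
  shows "-c \<in> Qset"
proof -
  let ?q = "c*c"
  obtain p where E1: "p + ?q - p*?q = 0" and E2: "?q + p - ?q*p = 0"
    using assms by (auto simp: Qset_def circ_def)
  have cq: "c*?q = ?q*c" by (simp add: mult.assoc)
  have "c - p*c = (c - p*c) - (c - p*c)*(?q + p - ?q*p)" using E2 by simp
  also have "\<dots> = (c - p*c - (c - p*c)*?q) - (c - p*c - (c - p*c)*?q)*p"
    by (simp add: algebra_simps)
  also have "c - p*c - (c - p*c)*?q = c - (p + ?q - p*?q)*c"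
    using cq by (simp add: algebra_simps)
  also have "\<dots> = c" using E1 by simp
  finally have "c - p*c = c - c*p" by simp
  then have pc: "p*c = c*p" by simp
  define p' where "p' = c + p - c*p"
  have "circ p' (-c) = ?q + p - ?q*p"
    unfolding p'_def circ_def using pc by (simp add: algebra_simps)
  moreover have "circ (-c) p' = ?q + p - ?q*p"
    unfolding p'_def circ_def using pc by (simp add: algebra_simps)
  ultimately show ?thesis using E2 unfolding Qset_def by auto
qed

lemma QN_neg:
  fixes b :: "'a::ring"
  assumes "b \<in> QNset"
  shows "-b \<in> QNset"
  unfolding QNset_def
proof (intro CollectI ballI)
  fix x assume "x \<in> gcomm (-b)"
  then have "(-x) \<in> gcomm b" by (simp add: gcomm_def)
  then have "b * (-x) \<in> Qset" using assms unfolding QNset_def by blast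
  then show "-b * x \<in> Qset" by simp
qed

locale cbm =
  fixes l :: "'s::ring_1 \<Rightarrow> 'a::ring \<Rightarrow> 'a" and r :: "'a \<Rightarrow> 's \<Rightarrow> 'a"
  assumes cb: "compat_bimodule l r"
begin

lemma l_add: "l s (v+w) = l s v + l s w" using cb by (simp add: compat_bimodule_def)
lemma l_sadd: "l (s+t) v = l s v + l t v" using cb by (simp add: compat_bimodule_def)
lemma l_one[simp]: "l 1 v = v" using cb by (simp add: compat_bimodule_def)
lemma r_add: "r (v+w) s = r v s + r w s" using cb by (simp add: compat_bimodule_def)
lemma r_sadd: "r v (s+t) = r v s + r v t" using cb by (simp add: compat_bimodule_def)
lemma r_one[simp]: "r v 1 = v" using cb by (simp add: compat_bimodule_def)
lemma r_vw: "r (v*w) s = v * r w s" using cb by (simp add: compat_bimodule_def)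
lemma rl: "r v s * w = v * l s w" using cb by (simp add: compat_bimodule_def)
lemma l_vw: "l s v * w = l s (v*w)" using cb by (simp add: compat_bimodule_def)

lemma l_0s[simp]: "l 0 v = 0" using l_sadd[of 0 0 v] by simp
lemma r_0s[simp]: "r v 0 = 0" using r_sadd[of v 0 0] by simp
lemma l_neg[simp]: "l s (-v) = - l s v"
proof -
  have "l s (-v) + l s v = l s 0" by (simp flip: l_add)
  moreover have "l s 0 = 0" using l_add[of s 0 0] by simp
  ultimately show ?thesis by (simp add: eq_neg_iff_add_eq_0)
qed
lemma r_neg[simp]: "r (-v) s = - r v s"
proof -
  have "r (-v) s + r v s = r 0 s" by (simp flip: r_add)
  moreover have "r 0 s = 0" using r_add[of 0 0 s] by simp
  ultimately show ?thesis by (simp add: eq_neg_iff_add_eq_0)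
qed

abbreviation "D \<equiv> dorroh l r"

lemma D_mult[simp]: "(s,v) \<otimes>\<^bsub>D\<^esub> (t,w) = (s*t, l s w + r v t + v*w)"
  by (simp add: dorroh_def)
lemma D_add[simp]: "(s,v) \<oplus>\<^bsub>D\<^esub> (t,w) = (s+t, v+w)"
  by (simp add: dorroh_def)
lemma D_one[simp]: "\<one>\<^bsub>D\<^esub> = (1,0)"
  by (simp add: dorroh_def)
lemma D_carrier[simp]: "carrier D = UNIV"
  by (simp add: dorroh_def)

lemma Units1: "((1::'s),v) \<in> Units D \<longleftrightarrow> -v \<in> Qset"
proof
  assume "(1,v) \<in> Units D"
  then obtain t w where h1: "(t,w) \<otimes>\<^bsub>D\<^esub> (1,v) = (1,0)" and h2: "(1,v) \<otimes>\<^bsub>D\<^esub> (t,w) = (1,0)"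
    unfolding Units_def by auto
  from h2 have t: "t = 1" by simp
  from h1 h2 t have a: "v + w + w*v = 0" and b: "w + v + v*w = 0" by simp_all
  have "circ (-w) (-v) = -(v + w + w*v)" by (simp add: circ_def algebra_simps)
  then have "circ (-w) (-v) = 0" using a by simp
  moreover have "circ (-v) (-w) = -(w + v + v*w)" by (simp add: circ_def algebra_simps)
  then have "circ (-v) (-w) = 0" using b by simp
  ultimately show "-v \<in> Qset" unfolding Qset_def by blast
next
  assume "-v \<in> Qset"
  then obtain p where a: "circ p (-v) = 0" and b: "circ (-v) p = 0" unfolding Qset_def by blast
  have "(1,-p) \<otimes>\<^bsub>D\<^esub> (1,v) = (1,0)" using a by (simp add: circ_def algebra_simps)
  moreover have "(1,v) \<otimes>\<^bsub>D\<^esub> (1,-p) = (1,0)" using b by (simp add: circ_def algebra_simps)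
  ultimately show "(1,v) \<in> Units D" unfolding Units_def D_carrier D_one by blast
qed


lemma comm0: "((0::'s),y) \<otimes>\<^bsub>D\<^esub> (0,a) = (0,a) \<otimes>\<^bsub>D\<^esub> (0,y) \<longleftrightarrow> y*a = a*y"
  by simp

lemma fwd:
  assumes "rquasipolar D ((0::'s), a)"
  shows "gquasipolar_elem (-a)"
proof -
  obtain P where P2: "P \<in> rcomm2 D (0,a)" and Pi: "P \<otimes>\<^bsub>D\<^esub> P = P"
    and PU: "(0,a) \<oplus>\<^bsub>D\<^esub> P \<in> Units D" and PN: "(0,a) \<otimes>\<^bsub>D\<^esub> P \<in> rqnil D"
    using assms unfolding rquasipolar_def by blast
  obtain \<sigma> x where P: "P = (\<sigma>, x)" by force
  from PU P obtain t w where "(\<sigma>, a + x) \<otimes>\<^bsub>D\<^esub> (t,w) = \<one>\<^bsub>D\<^esub>"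
    unfolding Units_def by auto
  then have st: "\<sigma> * t = 1" by simp
  from Pi P have ss: "\<sigma> * \<sigma> = \<sigma>" by simp
  have "\<sigma> = \<sigma> * (\<sigma> * t)" using st by simp
  also have "\<dots> = \<sigma> * t" by (simp flip: mult.assoc add: ss)
  finally have s1: "\<sigma> = 1" using st by simp
  from Pi P s1 have "x + x + x*x = x" by simp
  then have xx: "x * x = -x" by (simp add: eq_neg_iff_add_eq_0 add.commute)
  define e where "e = -x"
  have ee: "e * e = e" using xx by (simp add: e_def)
  have "(1::'s, a + x) \<in> Units D" using PU P s1 by simp
  then have Q: "-a + e \<in> Qset" using Units1 by (simp add: e_def add.commute)
  have C2: "e \<in> gcomm2 (-a)"
    unfolding gcomm2_def
  proof (intro CollectI ballI)
    fix y assume "y \<in> gcomm (-a)"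
    then have "y*a = a*y" by (simp add: gcomm_def)
    then have "(0,y) \<in> rcomm D (0,a)" unfolding rcomm_def by simp
    then have "P \<otimes>\<^bsub>D\<^esub> (0,y) = (0,y) \<otimes>\<^bsub>D\<^esub> P" using P2 unfolding rcomm2_def by blast
    then have "x*y = y*x" using P s1 by simp
    then show "e * y = y * e" by (simp add: e_def)
  qed
  define b where "b = a - a*e"
  have AP: "(0,a) \<otimes>\<^bsub>D\<^esub> P = (0,b)" using P s1 by (simp add: b_def e_def)
  have bQN: "b \<in> QNset"
    unfolding QNset_def
  proof (intro CollectI ballI)
    fix y assume "y \<in> gcomm b"
    then have "y*b = b*y" by (simp add: gcomm_def)
    then have "(0,-y) \<in> rcomm D (0,b)" unfolding rcomm_def by simp
    then have "\<one>\<^bsub>D\<^esub> \<oplus>\<^bsub>D\<^esub> (0,b) \<otimes>\<^bsub>D\<^esub> (0,-y) \<in> Units D"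
      using PN AP unfolding rqnil_def by auto
    then have "(1::'s, -(b*y)) \<in> Units D" by simp
    then show "b*y \<in> Qset" using Units1 by simp
  qed
  have "-a - (-a)*e = -b" by (simp add: b_def)
  then have "-a - (-a)*e \<in> QNset" using QN_neg[OF bQN] by simp
  then show ?thesis unfolding gquasipolar_elem_def using C2 ee Q by blast
qed

lemma bwd:
  assumes "gquasipolar_elem (-a)"
  shows "rquasipolar D ((0::'s), a)"
proof -
  obtain e where C2: "e \<in> gcomm2 (-a)" and ee: "e*e = e" and Q: "-a + e \<in> Qset"
    and N: "-a - (-a)*e \<in> QNset"
    using assms unfolding gquasipolar_elem_def by blast
  define b where "b = a - a*e"
  have "-(-a - (-a)*e) = b" by (simp add: b_def)
  then have bQN: "b \<in> QNset" using QN_neg[OF N] by simp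
  have "-a \<in> gcomm (-a)" by (simp add: gcomm_def)
  then have "e * (-a) = (-a) * e" using C2 unfolding gcomm2_def by blast
  then have ea: "e*a = a*e" by simp
  have P2: "((1::'s), -e) \<in> rcomm2 D (0,a)"
    unfolding rcomm2_def
  proof (intro CollectI conjI ballI)
    show "(1::'s, -e) \<in> carrier D" by simp
    fix Y assume Y: "Y \<in> rcomm D ((0::'s),a)"
    obtain t w where Yt: "Y = (t,w)" by force
    from Y Yt have H: "l t a + w*a = r a t + a*w" unfolding rcomm_def by simp
    define u where "u = l t e + w*e"
    define v where "v = r e t + e*w"
    have "u*a = l t (e*a) + w*(e*a)" by (simp add: u_def distrib_right l_vw mult.assoc)
    also have "\<dots> = l t a * e + (w*a)*e" by (simp add: ea l_vw mult.assoc)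
    also have "\<dots> = (l t a + w*a)*e" by (simp add: distrib_right)
    also have "\<dots> = (r a t + a*w)*e" by (simp add: H)
    also have "\<dots> = a*u" by (simp add: u_def distrib_right distrib_left rl mult.assoc)
    finally have "u*(-a) = (-a)*u" by simp
    then have "u \<in> gcomm (-a)" by (simp add: gcomm_def)
    then have eu1: "e*u = u*e" using C2 unfolding gcomm2_def by blast
    have "u*e = u" by (simp add: u_def distrib_right l_vw mult.assoc ee)
    with eu1 have eu: "e*u = u" by simp
    have "v*a = e*(l t a + w*a)" by (simp add: v_def distrib_right distrib_left rl mult.assoc)
    also have "\<dots> = e*(r a t + a*w)" by (simp add: H)
    also have "\<dots> = r (e*a) t + (e*a)*w" by (simp add: distrib_left r_vw mult.assoc)
    also have "\<dots> = a*v" by (simp add: ea v_def distrib_left r_vw mult.assoc)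
    finally have "v*(-a) = (-a)*v" by simp
    then have "v \<in> gcomm (-a)" by (simp add: gcomm_def)
    then have ev1: "e*v = v*e" using C2 unfolding gcomm2_def by blast
    have "e*v = v" by (simp add: v_def distrib_left ee flip: r_vw mult.assoc)
    with ev1 have ve: "v*e = v" by simp
    have "u = e*(l t e) + e*w*e" using eu by (simp add: u_def distrib_left mult.assoc)
    also have "\<dots> = v*e" by (simp add: v_def distrib_right rl)
    finally have uv: "u = v" using ve by simp
    show "(1, -e) \<otimes>\<^bsub>D\<^esub> Y = Y \<otimes>\<^bsub>D\<^esub> (1, -e)"
      using uv Yt by (simp add: u_def v_def algebra_simps)
  qed
  have Pi: "((1::'s), -e) \<otimes>\<^bsub>D\<^esub> (1,-e) = (1,-e)" using ee by simp
  have "-(a + -e) \<in> Qset" using Q by (simp add: add.commute)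
  then have PU: "(0,a) \<oplus>\<^bsub>D\<^esub> ((1::'s), -e) \<in> Units D" using Units1[of "a + -e"] by simp
  have AP: "(0,a) \<otimes>\<^bsub>D\<^esub> ((1::'s), -e) = (0,b)" by (simp add: b_def)
  have PN: "((0::'s), b) \<in> rqnil D"
    unfolding rqnil_def
  proof (intro CollectI conjI ballI)
    show "(0::'s, b) \<in> carrier D" by simp
    fix X assume X: "X \<in> rcomm D ((0::'s),b)"
    obtain t w where Xt: "X = (t,w)" by force
    define c where "c = r b t + b*w"
    from X Xt have H: "l t b + w*b = c" unfolding rcomm_def c_def by simp
    define y where "y = l t c + w*c"
    have cc: "c*c = b*y" by (simp add: c_def y_def distrib_right distrib_left rl mult.assoc l_add)
    have "c*b = b*(l t b + w*b)" by (simp add: c_def distrib_right distrib_left rl mult.assoc)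
    then have cb: "c*b = b*c" using H by simp
    have "y*b = l t (c*b) + w*(c*b)" by (simp add: y_def distrib_right l_vw mult.assoc)
    also have "\<dots> = (l t b + w*b)*c" by (simp add: cb distrib_right l_vw mult.assoc)
    also have "\<dots> = c*c" by (simp add: H)
    finally have "y \<in> gcomm b" using cc by (simp add: gcomm_def)
    then have "b*y \<in> Qset" using bQN unfolding QNset_def by blast
    then have "-c \<in> Qset" using Q_sq[of c] cc by simp
    then have "(1::'s, c) \<in> Units D" using Units1 by simp
    then show "\<one>\<^bsub>D\<^esub> \<oplus>\<^bsub>D\<^esub> (0,b) \<otimes>\<^bsub>D\<^esub> X \<in> Units D"
      using Xt by (simp add: c_def)
  qed
  show ?thesis unfolding rquasipolar_def
  proof (rule bexI[OF _ P2], intro conjI)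
    show "(0, a) \<otimes>\<^bsub>D\<^esub> ((1::'s), -e) \<in> rqnil D" using PN AP by simp
  qed (use Pi PU in \<open>simp_all only:\<close>)
qed

end

theorem proposition3p1:
  shows "(gquasipolar_ring TYPE('a::ring) \<longleftrightarrow> (\<forall>a::'a. rquasipolar EZ (0, a)))
    \<and> ((\<forall>a::'a. rquasipolar EZ (0, a)) \<longleftrightarrow>
         (\<exists>(l :: int \<Rightarrow> 'a \<Rightarrow> 'a) r. compat_bimodule l r \<and> (\<forall>a. rquasipolar (dorroh l r) (0, a))))
    \<and> (\<forall>(l :: 's::ring_1 \<Rightarrow> 'a \<Rightarrow> 'a) r.
         compat_bimodule l r \<and> (\<forall>a. rquasipolar (dorroh l r) (0, a))
         \<longrightarrow> gquasipolar_ring TYPE('a))"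
proof -
  have C: "gquasipolar_ring TYPE('a)"
    if "compat_bimodule (l :: 'b::ring_1 \<Rightarrow> 'a \<Rightarrow> 'a) r" "\<forall>a. rquasipolar (dorroh l r) (0, a)" for l r
  proof -
    interpret cbm l r by (rule cbm.intro[OF that(1)])
    have "gquasipolar_elem (- (- a))" for a :: 'a using fwd that(2) by blast
    then show ?thesis unfolding gquasipolar_ring_def by auto
  qed
  interpret Z: cbm "zact :: int \<Rightarrow> 'a \<Rightarrow> 'a" "\<lambda>v k. zact k v" by (rule cbm.intro[OF compat_zact])
  have A: "gquasipolar_ring TYPE('a) \<longleftrightarrow> (\<forall>a::'a. rquasipolar EZ (0, a))"
  proof
    assume "gquasipolar_ring TYPE('a)"
    then show "\<forall>a::'a. rquasipolar EZ (0, a)" using Z.bwd unfolding gquasipolar_ring_def by blast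
  next
    assume "\<forall>a::'a. rquasipolar EZ (0, a)"
    then show "gquasipolar_ring TYPE('a)" using C[OF compat_zact] by blast
  qed
  have B: "(\<forall>a::'a. rquasipolar EZ (0, a)) \<longleftrightarrow>
         (\<exists>(l :: int \<Rightarrow> 'a \<Rightarrow> 'a) r. compat_bimodule l r \<and> (\<forall>a. rquasipolar (dorroh l r) (0, a)))"
    using compat_zact A C by blast
  show ?thesis using A B C by blast
qed

end
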